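(* Let $p$ be a prime, $q$ a power of $p$, $n\ge1$ odd, $m=\frac{q^n+1}{q+1}$, and let $G\le B(Q_\infty)$ be a subgroup. Put $G_0=\pi_d(G)$, $G_1=\pi_a(G)$, $g_0=\#G_0$, $g_1=\#G_1$. Then $G_1=G_0^m=\{d^m: d\in G_0\}$ and $g_1=\frac{g_0}{\gcd(g_0,m)}$.
   Context: Let $\mathcal C_n=\mathbb{F}_{q^{2n}}(x,y,z)$ be the function field defined by $x^q+x=y^{q+1}$ and $z^m=y^{q^2}-y$. Let $B(Q_\infty)$ be the group of automorphisms $[a,b,c,d]$ of $\mathcal C_n$ given by $x\mapsto a^{q+1}x+ab^qy+c$, $y\mapsto ay+b$, $z\mapsto dz$, where $a\in\mathbb{F}_{q^2}^*$, $b,c\in\mathbb{F}_{q^2}$, $c^q+c=b^{q+1}$, $d\in\mathbb{F}_{q^{2n}}$, $d^m=a$; its group law is $[a',b',c',d']\circ[a,b,c,d]=[a'a,ab'+b,a^{q+1}c'+ab^qb'+c,d'd]$. Define the homomorphisms $\pi_d:[a,b,c,d]\mapsto d$ and $\pi_a:[a,b,c,d]\mapsto a$. All $d$ occurring lie in the cyclic group $\mu$ of $(q^n+1)(q-1)$-th roots of unity in $\mathbb{F}_{q^{2n}}^*$. *)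

theory Defs
  imports "HOL-Algebra.Group" "HOL-Computational_Algebra.Primes"
begin

text \<open>Elements [a,b,c,d] of B(Q_infinity) are represented as tuples (a,b,c,d) over the
  field 'a, which plays the role of F_{q^{2n}}.  F_{q^2} is the subfield {x. x^(q^2) = x}.\<close>

definition Fq2 :: "nat \<Rightarrow> 'a::field set" where
  "Fq2 q = {x. x ^ (q^2) = x}"

definition mexp :: "nat \<Rightarrow> nat \<Rightarrow> nat" where
  "mexp q n = (q ^ n + 1) div (q + 1)"

definition Bset :: "nat \<Rightarrow> nat \<Rightarrow> ('a::field \<times> 'a \<times> 'a \<times> 'a) set" where
  "Bset q n = {(a, b, c, d). a \<in> Fq2 q \<and> a \<noteq> 0 \<and> b \<in> Fq2 q \<and> c \<in> Fq2 q \<and>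
      c ^ q + c = b ^ (q + 1) \<and> d ^ (mexp q n) = a}"

definition Bmult :: "nat \<Rightarrow> ('a::field \<times> 'a \<times> 'a \<times> 'a) \<Rightarrow> ('a \<times> 'a \<times> 'a \<times> 'a) \<Rightarrow> ('a \<times> 'a \<times> 'a \<times> 'a)" where
  "Bmult q g h = (case g of (a', b', c', d') \<Rightarrow> case h of (a, b, c, d) \<Rightarrow>
      (a' * a, a * b' + b, a ^ (q + 1) * c' + a * b ^ q * b' + c, d' * d))"

text \<open>The group B(Q_infinity); Bmult q g h is the composition g \<circ> h.\<close>
definition BQ :: "nat \<Rightarrow> nat \<Rightarrow> ('a::field \<times> 'a \<times> 'a \<times> 'a) monoid" where
  "BQ q n = \<lparr>carrier = Bset q n, monoid.mult = Bmult q, one = (1, 0, 0, 1)\<rparr>"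

definition pi_a :: "('a \<times> 'a \<times> 'a \<times> 'a) \<Rightarrow> 'a" where
  "pi_a g = fst g"

definition pi_d :: "('a \<times> 'a \<times> 'a \<times> 'a) \<Rightarrow> 'a" where
  "pi_d g = snd (snd (snd g))"

end

theory Submission
  imports Defs "HOL-Computational_Algebra.Polynomial"
begin

lemma roots_unity_bound:
  assumes "e > 0" and "finite A" and "A \<subseteq> {x::'a::field. x ^ e = 1}"
  shows "card A \<le> e"
proof -
  define p :: "'a poly" where "p = monom 1 e - 1"
  have deg: "degree p \<le> e" unfolding p_def using assms
    by (intro degree_diff_le) (auto simp: degree_monom_le)
  have "coeff p e = 1" unfolding p_def using assms by (simp add: coeff_monom)
  hence "p \<noteq> 0" by auto
  have "{x. poly p x = 0} = {x::'a. x ^ e = 1}"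
    unfolding p_def by (auto simp: poly_monom)
  hence "card A \<le> card {x. poly p x = 0}" using assms poly_roots_finite[OF \<open>p \<noteq> 0\<close>]
    by (intro card_mono) auto
  with card_poly_roots_bound[OF \<open>p \<noteq> 0\<close>] deg show ?thesis by simp
qed

locale fgrp =
  fixes D :: "'a::field set"
  assumes fin: "finite D" and one: "1 \<in> D" and zero: "0 \<notin> D"
    and mul: "\<And>x y. x \<in> D \<Longrightarrow> y \<in> D \<Longrightarrow> x * y \<in> D"
begin

lemma nz: "x \<in> D \<Longrightarrow> x \<noteq> 0" using zero by auto

lemma transl: assumes "x \<in> D" shows "(\<lambda>y. x * y) ` D = D"
proof -
  have inj: "inj_on (\<lambda>y. x * y) D" using nz[OF assms] by (auto simp: inj_on_def)
  have sub: "(\<lambda>y. x * y) ` D \<subseteq> D" using mul assms by auto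
  have "card ((\<lambda>y. x * y) ` D) = card D" using card_image[OF inj] .
  thus ?thesis using sub fin by (metis card_subset_eq)
qed

lemma inv_in: assumes "x \<in> D" shows "\<exists>y\<in>D. x * y = 1"
  using transl[OF assms] one by (metis imageE)

lemma pow_card: assumes "x \<in> D" shows "x ^ card D = 1"
proof -
  have inj: "inj_on (\<lambda>y. x * y) D" using nz[OF assms] by (auto simp: inj_on_def)
  have "prod (\<lambda>y. y) D = prod (\<lambda>y. y) ((\<lambda>y. x * y) ` D)" using transl[OF assms] by simp
  also have "\<dots> = prod (\<lambda>y. x * y) D" using prod.reindex[OF inj] by simp
  also have "\<dots> = x ^ card D * prod (\<lambda>y. y) D" by (simp add: prod.distrib)
  finally have "x ^ card D * prod (\<lambda>y. y) D = 1 * prod (\<lambda>y. y) D" by simp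
  moreover have "prod (\<lambda>y. y) D \<noteq> 0" using fin zero by (simp add: prod_zero_iff)
  ultimately show ?thesis by simp
qed

definition K :: "nat \<Rightarrow> 'a set" where "K e = {x \<in> D. x ^ e = 1}"

lemma fibre: assumes "x0 \<in> D" shows "card {x \<in> D. x ^ e = x0 ^ e} = card (K e)"
proof -
  obtain y where y: "y \<in> D" "x0 * y = 1" using inv_in[OF assms] by blast
  have "{x \<in> D. x ^ e = x0 ^ e} = (\<lambda>k. x0 * k) ` K e"
  proof
    show "{x \<in> D. x ^ e = x0 ^ e} \<subseteq> (\<lambda>k. x0 * k) ` K e"
    proof
      fix x assume x: "x \<in> {x \<in> D. x ^ e = x0 ^ e}"
      have "y * x \<in> K e" unfolding K_def using x y mul
        by (auto simp: power_mult_distrib) (metis mult.commute power_mult_distrib power_one)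
      moreover have "x = x0 * (y * x)" using y by (simp add: mult.assoc[symmetric])
      ultimately show "x \<in> (\<lambda>k. x0 * k) ` K e" by blast
    qed
    show "(\<lambda>k. x0 * k) ` K e \<subseteq> {x \<in> D. x ^ e = x0 ^ e}"
      using mul assms by (auto simp: K_def power_mult_distrib)
  qed
  moreover have "inj_on (\<lambda>k. x0 * k) (K e)" using nz[OF assms] by (auto simp: inj_on_def)
  ultimately show ?thesis by (simp add: card_image)
qed

lemma card_split: "card D = card ((\<lambda>x. x ^ e) ` D) * card (K e)"
proof -
  have "card D = (\<Sum>z\<in>(\<lambda>x. x ^ e) ` D. card {x \<in> D. x ^ e = z})"
    using sum.image_gen[OF fin, of "\<lambda>_. 1::nat" "\<lambda>x. x ^ e"] by simp
  also have "\<dots> = (\<Sum>z\<in>(\<lambda>x. x ^ e) ` D. card (K e))"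
  proof (rule sum.cong)
    fix z assume "z \<in> (\<lambda>x. x ^ e) ` D"
    then obtain x0 where "x0 \<in> D" "z = x0 ^ e" by blast
    thus "card {x \<in> D. x ^ e = z} = card (K e)" using fibre by simp
  qed simp
  finally show ?thesis by simp
qed

lemma cardpos: "card D > 0" using fin one card_gt_0_iff by blast

lemma K_dvd: assumes "e dvd card D" shows "card (K e) = e"
proof -
  define g where "g = card D"
  have gpos: "g > 0" using cardpos g_def by simp
  have epos: "e > 0" using assms gpos g_def by (auto intro: Nat.gr0I)
  obtain f where f: "g = e * f" using assms g_def by blast
  have fpos: "f > 0" using f gpos by auto
  have K1: "card (K e) \<le> e"
    by (rule roots_unity_bound[OF epos]) (use fin in \<open>auto simp: K_def\<close>)
  have I1: "card ((\<lambda>x. x ^ e) ` D) \<le> f"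
  proof (rule roots_unity_bound[OF fpos])
    show "finite ((\<lambda>x. x ^ e) ` D)" using fin by simp
    show "(\<lambda>x. x ^ e) ` D \<subseteq> {x. x ^ f = 1}"
    proof
      fix y assume "y \<in> (\<lambda>x. x ^ e) ` D"
      then obtain x where x: "x \<in> D" "y = x ^ e" by blast
      have "y ^ f = x ^ g" using x f by (simp add: power_mult)
      thus "y \<in> {x. x ^ f = 1}" using pow_card[OF x(1)] g_def by simp
    qed
  qed
  have "e * f = card ((\<lambda>x. x ^ e) ` D) * card (K e)" using card_split f g_def by simp
  also have "\<dots> \<le> f * card (K e)" using I1 by simp
  finally have "e \<le> card (K e)" using fpos by (simp add: mult.commute)
  with K1 show ?thesis by simp
qed

lemma pow_gcd: fixes x :: 'a
  shows "x ^ a = 1 \<Longrightarrow> x ^ b = 1 \<Longrightarrow> x ^ gcd a b = 1"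
proof (induction a b rule: gcd_nat_induct)
  case (step m n)
  have "x ^ m = (x ^ n) ^ (m div n) * x ^ (m mod n)"
    by (metis div_mult_mod_eq power_add power_mult mult.commute)
  hence "x ^ (m mod n) = 1" using step.prems by simp
  with step show ?case by (simp add: gcd_non_0_nat)
qed simp

lemma K_gcd: "K m = K (gcd (card D) m)"
proof -
  have "x ^ m = 1 \<longleftrightarrow> x ^ gcd (card D) m = 1" if "x \<in> D" for x
  proof
    assume "x ^ m = 1" thus "x ^ gcd (card D) m = 1" using pow_gcd pow_card[OF that] by blast
  next
    assume h: "x ^ gcd (card D) m = 1"
    obtain t where "m = gcd (card D) m * t" by (meson gcd_dvd2 dvdE)
    hence "x ^ m = (x ^ gcd (card D) m) ^ t" by (metis power_mult)
    thus "x ^ m = 1" using h by simp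
  qed
  thus ?thesis unfolding K_def by auto
qed

lemma image_card: "card ((\<lambda>x. x ^ m) ` D) = card D div gcd (card D) m"
proof -
  have "card (K m) = gcd (card D) m" using K_gcd[of m] K_dvd[of "gcd (card D) m"] by simp
  moreover have "gcd (card D) m > 0" using cardpos by simp
  ultimately show ?thesis using card_split[of m] by simp
qed

end

theorem lemma3p3:
  fixes p q n k :: nat and G :: "('a::{field,finite} \<times> 'a \<times> 'a \<times> 'a) set"
  assumes "prime p" and "k \<ge> 1" and "q = p ^ k"
    and "n \<ge> 1" and "odd n"
    and "card (UNIV :: 'a set) = q ^ (2 * n)"
    and "subgroup G (BQ q n)"
  shows "pi_a ` G = (\<lambda>d. d ^ mexp q n) ` (pi_d ` G)
    \<and> card (pi_a ` G) = card (pi_d ` G) div gcd (card (pi_d ` G)) (mexp q n)"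
proof -
  let ?m = "mexp q n"
  have p2: "p \<ge> 2" using assms(1) by (rule prime_ge_2_nat)
  have "p ^ 1 \<le> p ^ k" using assms(2) p2 by (intro power_increasing) auto
  hence q2: "q \<ge> 2" using p2 assms(3) by simp
  have "q ^ 1 \<le> q ^ n" using assms(4) q2 by (intro power_increasing) auto
  hence mpos: "?m > 0" unfolding mexp_def by (simp add: div_greater_zero_iff)
  have sub: "G \<subseteq> Bset q n" using subgroup.subset[OF assms(7)] by (simp add: BQ_def)
  have A: "pi_a g = pi_d g ^ ?m \<and> pi_a g \<noteq> 0" if g: "g \<in> G" for g
  proof -
    obtain a b c d where gd: "g = (a, b, c, d)" by (cases g) auto
    have "g \<in> Bset q n" using g sub by blast
    thus ?thesis unfolding gd Bset_def pi_a_def pi_d_def by simp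
  qed
  have eq: "pi_a ` G = (\<lambda>d. d ^ ?m) ` (pi_d ` G)"
    unfolding image_comp using A by (intro image_cong) (auto simp: o_def)
  have "fgrp (pi_d ` G)"
  proof
    show "finite (pi_d ` G)" by simp
    have "(1, 0, 0, 1) \<in> G" using subgroup.one_closed[OF assms(7)] by (simp add: BQ_def)
    hence "pi_d (1, 0, 0, 1) \<in> pi_d ` G" by (rule imageI)
    thus "1 \<in> pi_d ` G" by (simp add: pi_d_def)
    show "0 \<notin> pi_d ` G"
    proof
      assume "0 \<in> pi_d ` G"
      then obtain g where "g \<in> G" "0 = pi_d g" by (rule imageE)
      with A[of g] mpos show False by (simp add: zero_power)
    qed
    fix x y assume "x \<in> pi_d ` G" "y \<in> pi_d ` G"
    then obtain g h where gh: "g \<in> G" "h \<in> G" "x = pi_d g" "y = pi_d h" by blast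
    have "Bmult q g h \<in> G" using subgroup.m_closed[OF assms(7) gh(1,2)] by (simp add: BQ_def)
    hence "pi_d (Bmult q g h) \<in> pi_d ` G" by (rule imageI)
    moreover have "pi_d (Bmult q g h) = x * y" using gh
      by (cases g; cases h) (simp add: Bmult_def pi_d_def)
    ultimately show "x * y \<in> pi_d ` G" by simp
  qed
  from fgrp.image_card[OF this, of ?m] eq show ?thesis by simp
qed

end
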